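(* Let $\mu,\varepsilon,\nu,\Omega,\omega$ be real or complex parameters with $\mu\neq 0$ and $\nu\notin\{2,3,4,\dots\}$, and consider the grand confluent hypergeometric (GCH) equation $$x\,y''(x)+\left(\mu x^2+\varepsilon x+\nu\right)y'(x)+\left(\Omega x+\varepsilon\omega\right)y(x)=0 .$$ Put $\gamma=\tfrac12(1+\nu)$, $a=\frac{\Omega}{2\mu}$, $\tilde\varepsilon=-\tfrac12\varepsilon x$ and $z=-\tfrac12\mu x^2$, and assume $1-a$ is not a nonpositive integer. Then the function $$ \begin{aligned} y(x)=RW\Big(\omega,\gamma;\tilde\varepsilon;z\Big)=z^{1-\gamma}\frac{\Gamma(1-a)}{\Gamma(2-\gamma)}\Bigg\{&\sum_{i_0=0}^{\infty}\frac{(a+1-\gamma)_{i_0}}{(1)_{i_0}(2-\gamma)_{i_0}}z^{i_0}\\ &+\Bigg\{\sum_{i_0=0}^{\infty}\frac{(i_0+1-\gamma+\frac{\omega}{2})}{(i_0+\frac12)(i_0+\frac32-\gamma)}\frac{(a+1-\gamma)_{i_0}}{(1)_{i_0}(2-\gamma)_{i_0}}\sum_{i_1=i_0}^{\infty}\frac{(a+\frac32-\gamma)_{i_1}(\frac32)_{i_0}(\frac52-\gamma)_{i_0}}{(a+\frac32-\gamma)_{i_0}(\frac32)_{i_1}(\frac52-\gamma)_{i_1}}z^{i_1}\Bigg\}\tilde\varepsilon\\ &+\sum_{n=2}^{\infty}\Bigg\{\sum_{i_0=0}^{\infty}\frac{(i_0+1-\gamma+\frac{\omega}{2})}{(i_0+\frac12)(i_0+\frac32-\gamma)}\frac{(a+1-\gamma)_{i_0}}{(1)_{i_0}(2-\gamma)_{i_0}}\\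 &\quad\times\prod_{k=1}^{n-1}\Bigg\{\sum_{i_k=i_{k-1}}^{\infty}\frac{(i_k+1-\gamma+\frac{\omega}{2}+\frac k2)}{(i_k+\frac12+\frac k2)(i_k+\frac32-\gamma+\frac k2)}\frac{(a+1-\gamma+\frac k2)_{i_k}(1+\frac k2)_{i_{k-1}}(2-\gamma+\frac k2)_{i_{k-1}}}{(a+1-\gamma+\frac k2)_{i_{k-1}}(1+\frac k2)_{i_k}(2-\gamma+\frac k2)_{i_k}}\Bigg\}\\ &\quad\times\sum_{i_n=i_{n-1}}^{\infty}\frac{(a+1-\gamma+\frac n2)_{i_n}(1+\frac n2)_{i_{n-1}}(2-\gamma+\frac n2)_{i_{n-1}}}{(a+1-\gamma+\frac n2)_{i_{n-1}}(1+\frac n2)_{i_n}(2-\gamma+\frac n2)_{i_n}}z^{i_n}\Bigg\}\tilde\varepsilon^{\,n}\Bigg\} \end{aligned} $$ is the power series expansion about $x=0$ of a solution (the solution of the second kind, corresponding to the indicial root $\lambda=1-\nu=2(1-\gamma)$) of the GCH equation.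
   Context: $(x)_n=\Gamma(x+n)/\Gamma(x)$ denotes the Pochhammer symbol (rising factorial), and for integers $m\ge n\ge 0$ a quotient $(b)_m/(b)_n$ is understood as $\prod_{j=n}^{m-1}(b+j)$. In the term with index $n\ge 2$, the product over $k=1,\dots,n-1$ denotes nested summation: the sum over $i_k$ runs from $i_{k-1}$ to $\infty$, with $i_{k-1}$ the summation index of the previous level, and the innermost sum over $i_n$ runs from $i_{n-1}$ to $\infty$. The factor $z^{1-\gamma}$ equals $\left(-\tfrac12\mu\right)^{1-\gamma}x^{2(1-\gamma)}$ for a fixed choice of branch. *)

theory Defs
  imports "HOL-Analysis.Analysis"
begin

text \<open>Quotient of Pochhammer symbols (b)_n / (b)_m for m \<le> n, understood as the
  product of (b+j) for j from m to n-1 (convention of the paper).\<close>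
definition pqt :: "complex \<Rightarrow> nat \<Rightarrow> nat \<Rightarrow> complex" where
  "pqt b m n = (\<Prod>j=m..<n. b + of_nat j)"

definition RW_fac :: "complex \<Rightarrow> complex \<Rightarrow> nat \<Rightarrow> nat \<Rightarrow> complex" where
  "RW_fac g w k i = (of_nat i + 1 - g + w / 2 + of_nat k / 2) /
      ((of_nat i + 1/2 + of_nat k / 2) * (of_nat i + 3/2 - g + of_nat k / 2))"

text \<open>The ratio (a+1-g+k/2)_{j}(1+k/2)_{i}(2-g+k/2)_{i} /
  ((a+1-g+k/2)_{i}(1+k/2)_{j}(2-g+k/2)_{j}), with i = i_{k-1} \<le> j = i_k.\<close>
definition RW_ratio :: "complex \<Rightarrow> complex \<Rightarrow> nat \<Rightarrow> nat \<Rightarrow> nat \<Rightarrow> complex" where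
  "RW_ratio g a k i j =
     pqt (a + 1 - g + of_nat k / 2) i j
     * pochhammer (1 + of_nat k / 2) i * pochhammer (2 - g + of_nat k / 2) i
     / (pochhammer (1 + of_nat k / 2) j * pochhammer (2 - g + of_nat k / 2) j)"

definition RW_A :: "complex \<Rightarrow> complex \<Rightarrow> nat \<Rightarrow> complex" where
  "RW_A g a i = pochhammer (a + 1 - g) i / (pochhammer 1 i * pochhammer (2 - g) i)"

text \<open>RW_in g a w z n m i is the part of the
  n-th term starting at level k = n - m, where i = i_{k-1}:
  for m = 0 it is sum_{i_n = i}^\<infinity> ratio_n(i, i_n) z^{i_n};
  for m > 0 it is sum_{i_k = i}^\<infinity> fac_k(i_k) ratio_k(i, i_k) (level k+1 at i_k).\<close>
fun RW_in :: "complex \<Rightarrow> complex \<Rightarrow> complex \<Rightarrow> complex \<Rightarrow> nat \<Rightarrow> nat \<Rightarrow> nat \<Rightarrow> complex" where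
  "RW_in g a w z n 0 i = (\<Sum>j. RW_ratio g a n i (i + j) * z ^ (i + j))"
| "RW_in g a w z n (Suc m) i =
     (\<Sum>j. RW_fac g w (n - Suc m) (i + j) * RW_ratio g a (n - Suc m) i (i + j)
            * RW_in g a w z n m (i + j))"

definition RW_term :: "complex \<Rightarrow> complex \<Rightarrow> complex \<Rightarrow> complex \<Rightarrow> nat \<Rightarrow> complex" where
  "RW_term g a w z n = (\<Sum>i. RW_fac g w 0 i * RW_A g a i * RW_in g a w z n (n - 1) i)"

definition RW_term0 :: "complex \<Rightarrow> complex \<Rightarrow> complex \<Rightarrow> complex" where
  "RW_term0 g a z = (\<Sum>i. RW_A g a i * z ^ i)"

definition RW_braces :: "complex \<Rightarrow> complex \<Rightarrow> complex \<Rightarrow> complex \<Rightarrow> complex \<Rightarrow> complex" where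
  "RW_braces g a w e z = RW_term0 g a z + RW_term g a w z 1 * e
      + (\<Sum>m. RW_term g a w z (m + 2) * e ^ (m + 2))"

definition RW_converges :: "complex \<Rightarrow> complex \<Rightarrow> complex \<Rightarrow> complex \<Rightarrow> complex \<Rightarrow> bool" where
  "RW_converges g a w e z \<longleftrightarrow>
     summable (\<lambda>i. RW_A g a i * z ^ i)
   \<and> (\<forall>n\<ge>1. summable (\<lambda>i. RW_fac g w 0 i * RW_A g a i * RW_in g a w z n (n - 1) i))
   \<and> (\<forall>n\<ge>1. \<forall>i. summable (\<lambda>j. RW_ratio g a n i (i + j) * z ^ (i + j)))
   \<and> (\<forall>n m i. Suc m < n \<longrightarrow>
        summable (\<lambda>j. RW_fac g w (n - Suc m) (i + j) * RW_ratio g a (n - Suc m) i (i + j)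
                        * RW_in g a w z n m (i + j)))
   \<and> summable (\<lambda>m. RW_term g a w z (m + 2) * e ^ (m + 2))"

text \<open>The function RW(omega, gamma; eps-tilde; z) as a function of x, with
  z^(1-gamma) = (-mu/2)^(1-gamma) x^(2(1-gamma)) (principal branches).\<close>
definition RW_sol :: "complex \<Rightarrow> complex \<Rightarrow> complex \<Rightarrow> complex \<Rightarrow> complex \<Rightarrow> complex \<Rightarrow> complex" where
  "RW_sol mu eps nu Om om x =
     (let g = (1 + nu) / 2; a = Om / (2 * mu); e = - eps * x / 2; z = - mu * x\<^sup>2 / 2 in
      ((- mu / 2) powr (1 - g) * x powr (2 * (1 - g)))
      * (Gamma (1 - a) / Gamma (2 - g)) * RW_braces g a om e z)"

end

theory Submission
  imports Defs
begin
lemma nat_series_infsum: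
  fixes g :: "nat \<Rightarrow> complex"
  assumes "g summable_on UNIV"
  shows "summable g \<and> suminf g = infsum g UNIV"
proof -
  have "(\<lambda>n. norm (g n)) summable_on UNIV" using assms summable_on_iff_abs_summable_on_complex by blast
  then have ns: "summable (\<lambda>n. norm (g n))" by (rule summable_on_imp_summable)
  then have s: "summable g" by (rule summable_norm_cancel)
  have "(g has_sum suminf g) UNIV"
    by (rule norm_summable_imp_has_sum[OF ns]) (use s in \<open>simp add: summable_sums\<close>)
  then show ?thesis using s infsumI by metis
qed

lemma pair_fubini:
  fixes f :: "nat \<times> nat \<Rightarrow> complex"
  assumes "f summable_on UNIV"
  shows "(\<forall>a. summable (\<lambda>b. f (a,b))) \<and> summable (\<lambda>a. \<Sum>b. f (a,b))
     \<and> (\<Sum>a. \<Sum>b. f (a,b)) = infsum f UNIV"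
proof -
  have S: "f summable_on Sigma UNIV (\<lambda>_. UNIV)" using assms by simp
  have inner: "(\<lambda>b. f (a,b)) summable_on UNIV" for a
    using summable_on_SigmaD1[of "\<lambda>x y. f (x,y)" UNIV "\<lambda>_. UNIV" a] S by auto
  have innerE: "summable (\<lambda>b. f (a,b)) \<and> (\<Sum>b. f (a,b)) = infsum (\<lambda>b. f (a,b)) UNIV" for a
    using nat_series_infsum[OF inner] .
  have outer: "(\<lambda>a. infsum (\<lambda>b. f (a,b)) UNIV) summable_on UNIV"
    using summable_on_SigmaD[OF S] inner by blast
  have eq: "(\<lambda>a. \<Sum>b. f (a,b)) = (\<lambda>a. infsum (\<lambda>b. f (a,b)) UNIV)" using innerE by auto
  have "summable (\<lambda>a. \<Sum>b. f (a,b)) \<and> (\<Sum>a. \<Sum>b. f (a,b)) = infsum (\<lambda>a. infsum (\<lambda>b. f (a,b)) UNIV) UNIV"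
    unfolding eq by (rule nat_series_infsum[OF outer])
  moreover have "infsum (\<lambda>a. infsum (\<lambda>b. f (a,b)) UNIV) UNIV = infsum f (Sigma UNIV (\<lambda>_. UNIV))"
    by (rule infsum_Sigma_banach[OF S])
  ultimately show ?thesis using innerE by simp
qed

lemma triangle_fubini:
  fixes f :: "nat \<Rightarrow> nat \<Rightarrow> complex"
  assumes "(\<lambda>(i,j). f i (i+j)) summable_on UNIV"
  shows "(\<forall>i. summable (\<lambda>j. f i (i+j))) \<and> summable (\<lambda>i. \<Sum>j. f i (i+j))
     \<and> summable (\<lambda>J. \<Sum>i\<le>J. f i J)
     \<and> (\<Sum>i. \<Sum>j. f i (i+j)) = (\<Sum>J. \<Sum>i\<le>J. f i J)"
proof -
  let ?F = "\<lambda>(i,j). f i (i+j)"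
  let ?G = "\<lambda>(J,i). f i J"
  let ?T = "Sigma UNIV (\<lambda>J::nat. {..J})"
  have bij: "(?F has_sum s) UNIV = (?G has_sum s) ?T" for s
    by (rule has_sum_reindex_bij_witness[where j="\<lambda>(i,j). (i+j,i)" and i="\<lambda>(J,i). (i,J-i)"]) auto
  from assms obtain s where s: "(?F has_sum s) UNIV" by (auto simp: summable_on_def)
  have G: "(?G has_sum s) ?T" using bij s by blast
  note P1 = pair_fubini[OF assms]
  have Gs: "?G summable_on ?T" using G by (auto simp: summable_on_def)
  have in2: "(\<lambda>i. ?G (J,i)) summable_on {..J}" for J by (intro summable_on_finite) auto
  have out2: "(\<lambda>J. infsum (\<lambda>i. ?G (J,i)) {..J}) summable_on UNIV"
    using summable_on_SigmaD[OF Gs] in2 by blast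
  have eq2: "(\<lambda>J. infsum (\<lambda>i. ?G (J,i)) {..J}) = (\<lambda>J. \<Sum>i\<le>J. f i J)"
    by (auto simp: infsum_finite)
  note O2 = nat_series_infsum[OF out2[unfolded eq2]]
  have "infsum (\<lambda>J. infsum (\<lambda>i. ?G (J,i)) {..J}) UNIV = infsum ?G ?T"
    by (rule infsum_Sigma_banach[OF Gs])
  then have "(\<Sum>J. \<Sum>i\<le>J. f i J) = s" using O2 eq2 G infsumI by (metis (no_types, lifting))
  moreover have "(\<Sum>i. \<Sum>j. f i (i+j)) = s" using P1 s infsumI by (simp add: case_prod_beta)
  ultimately show ?thesis using P1 O2 by (simp add: case_prod_beta)
qed

lemma diag_fubini:
  fixes f :: "nat \<times> nat \<Rightarrow> complex"
  assumes "f summable_on UNIV"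
  shows "summable (\<lambda>N. \<Sum>J\<in>{J. 2*J\<le>N}. f (N-2*J,J))
     \<and> (\<Sum>a. \<Sum>b. f (a,b)) = (\<Sum>N. \<Sum>J\<in>{J. 2*J\<le>N}. f (N-2*J,J))"
proof -
  let ?G = "\<lambda>(N,J). f (N-2*J,J)"
  let ?T = "Sigma UNIV (\<lambda>N::nat. {J. 2*J\<le>N})"
  have fin: "finite {J::nat. 2*J\<le>N}" for N by (rule finite_subset[of _ "{..N}"]) auto
  have bij: "(f has_sum s) UNIV = (?G has_sum s) ?T" for s
    by (rule has_sum_reindex_bij_witness[where j="\<lambda>(n,J). (n+2*J,J)" and i="\<lambda>(N,J). (N-2*J,J)"]) auto
  from assms obtain s where s: "(f has_sum s) UNIV" by (auto simp: summable_on_def)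
  have G: "(?G has_sum s) ?T" using bij s by blast
  note P1 = pair_fubini[OF assms]
  have Gs: "?G summable_on ?T" using G by (auto simp: summable_on_def)
  have in2: "(\<lambda>J. ?G (N,J)) summable_on {J. 2*J\<le>N}" for N by (intro summable_on_finite fin)
  have out2: "(\<lambda>N. infsum (\<lambda>J. ?G (N,J)) {J. 2*J\<le>N}) summable_on UNIV"
    using summable_on_SigmaD[OF Gs] in2 by blast
  have eq2: "(\<lambda>N. infsum (\<lambda>J. ?G (N,J)) {J. 2*J\<le>N}) = (\<lambda>N. \<Sum>J\<in>{J. 2*J\<le>N}. f (N-2*J,J))"
    using fin by (auto simp: infsum_finite)
  note O2 = nat_series_infsum[OF out2[unfolded eq2]]
  have "infsum (\<lambda>N. infsum (\<lambda>J. ?G (N,J)) {J. 2*J\<le>N}) UNIV = infsum ?G ?T"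
    by (rule infsum_Sigma_banach[OF Gs])
  then have "(\<Sum>N. \<Sum>J\<in>{J. 2*J\<le>N}. f (N-2*J,J)) = s" using O2 eq2 G infsumI by (metis (no_types, lifting))
  moreover have "(\<Sum>a. \<Sum>b. f (a,b)) = s" using P1 s infsumI by simp
  ultimately show ?thesis using O2 by simp
qed

lemma product_summable_on:
  fixes u v :: "nat \<Rightarrow> real"
  assumes "\<And>i. u i \<ge> 0" "\<And>j. v j \<ge> 0" "summable u" "summable v"
  shows "(\<lambda>(i,j). u i * v j) summable_on UNIV"
proof -
  have hv: "(v has_sum suminf v) UNIV"
    using sums_nonneg_imp_has_sum[of v] assms summable_sums by blast
  have inner: "((\<lambda>j. (\<lambda>(i,j). u i * v j) (i,j)) has_sum (u i * suminf v)) UNIV" for i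
    using has_sum_cmult_right[OF hv, of "u i"] by simp
  have "summable (\<lambda>i. u i * suminf v)" using assms(3) by (rule summable_mult2)
  then have outer: "(\<lambda>i. u i * suminf v) summable_on UNIV"
    using assms by (intro norm_summable_imp_summable_on) (simp add: abs_mult suminf_nonneg)
  have "(\<lambda>(i,j). u i * v j) summable_on Sigma UNIV (\<lambda>_. UNIV)"
    by (rule summable_on_SigmaI[OF inner outer]) (use assms in auto)
  then show ?thesis by simp
qed

lemma exp_bound:
  fixes f :: "nat \<Rightarrow> complex"
  assumes "A \<ge> 0" "r \<ge> 0" "\<And>j. norm (f j) \<le> A * r^j / fact j"
  shows "summable f \<and> norm (suminf f) \<le> A * exp r \<and> summable (\<lambda>j. norm (f j))"
proof -
  have es: "(\<lambda>j. A * (r^j / fact j)) sums (A * exp r)"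
    using sums_mult[OF exp_converges[of r], of A] by (simp add: divide_inverse mult_ac)
  have b: "norm (f j) \<le> A * (r^j / fact j)" for j using assms(3)[of j] by simp
  have sn: "summable (\<lambda>j. norm (f j))"
    by (rule summable_comparison_test[OF _ sums_summable[OF es]]) (use b in auto)
  have "norm (suminf f) \<le> (\<Sum>j. norm (f j))" by (rule summable_norm[OF sn])
  also have "\<dots> \<le> A * exp r" using suminf_le[OF b sn sums_summable[OF es]] sums_unique[OF es] by simp
  finally show ?thesis using summable_norm_cancel[OF sn] sn by simp
qed

lemma lin_lower:
  fixes q :: complex
  assumes "\<And>m::nat. q + of_nat m \<noteq> 0"
  shows "\<exists>\<delta>>0. \<forall>m::nat. \<delta> * (real m + 1) \<le> norm (q + of_nat m)"
proof -
  define N :: nat where "N = nat \<lceil>2 * norm q\<rceil> + 1"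
  define d0 where "d0 = Min ((\<lambda>m. norm (q + of_nat m)) ` {..<N})"
  have N1: "N \<ge> 1" unfolding N_def by simp
  have fin: "finite ((\<lambda>m. norm (q + of_nat m)) ` {..<N})" by simp
  have ne: "(\<lambda>m. norm (q + of_nat m)) ` {..<N} \<noteq> {}" using N1 by (simp add: lessThan_empty_iff)
  have d0pos: "d0 > 0" unfolding d0_def using fin ne assms by (subst Min_gr_iff) auto
  have d0le: "d0 \<le> norm (q + of_nat m)" if "m < N" for m
    unfolding d0_def using fin that by (intro Min_le) auto
  define \<delta> where "\<delta> = min (1/2) (d0 / real N)"
  have dpos: "\<delta> > 0" unfolding \<delta>_def using d0pos N1 by simp
  have "\<delta> * (real m + 1) \<le> norm (q + of_nat m)" for m
  proof (cases "m < N")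
    case True
    have "\<delta> * (real m + 1) \<le> (d0 / real N) * real N"
      unfolding \<delta>_def using True d0pos N1
      by (intro mult_mono) (auto simp: min_le_iff_disj)
    also have "\<dots> = d0" using N1 by simp
    finally show ?thesis using d0le[OF True] by simp
  next
    case False
    then have mN: "real m \<ge> 2 * norm q + 1" unfolding N_def by linarith
    have "norm (of_nat m :: complex) - norm q \<le> norm (q + of_nat m)"
      by (metis add.commute norm_diff_ineq)
    then have A: "real m - norm q \<le> norm (q + of_nat m)" by simp
    have B: "\<delta> \<le> 1/2" unfolding \<delta>_def by (rule min.cobounded1)
    have C: "\<delta> * (real m + 1) \<le> (1/2) * (real m + 1)"
      by (intro mult_right_mono) (use B in auto)
    have D: "(1/2) * (real m + 1) \<le> norm (q + of_nat m)" using A mN by (simp add: field_simps)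
    show ?thesis using order.trans[OF C D] .
  qed
  then show ?thesis using dpos by blast
qed

definition rho :: "complex \<Rightarrow> complex \<Rightarrow> nat \<Rightarrow> nat \<Rightarrow> complex" where
  "rho g a k t = (a + 1 - g + of_nat k / 2 + of_nat t) /
     ((1 + of_nat k / 2 + of_nat t) * (2 - g + of_nat k / 2 + of_nat t))"

lemma norm_pos_real: "norm (of_nat i + c / 2 + of_nat k / 2 :: complex) = real i + c/2 + real k / 2"
  if "c \<ge> 0" for c :: real
proof -
  have "(of_nat i + c / 2 + of_nat k / 2 :: complex) = of_real (real i + c/2 + real k / 2)" by simp
  then show ?thesis using that by (simp only: norm_of_real; simp)
qed

locale params =
  fixes g a w :: complex
  assumes hyp: "\<And>m::nat. 3 - 2*g + of_nat m \<noteq> 0"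
begin

definition del where "del = (SOME \<delta>. \<delta> > 0 \<and> (\<forall>m::nat. \<delta> * (real m + 1) \<le> norm (3 - 2*g + of_nat m)))"

lemma del: "del > 0" "\<And>m::nat. del * (real m + 1) \<le> norm (3 - 2*g + of_nat m)"
proof -
  have "\<exists>\<delta>. \<delta> > 0 \<and> (\<forall>m::nat. \<delta> * (real m + 1) \<le> norm (3 - 2*g + of_nat m))"
    using lin_lower[of "3 - 2*g"] hyp by blast
  from someI_ex[OF this] show "del > 0" "\<And>m::nat. del * (real m + 1) \<le> norm (3 - 2*g + of_nat m)"
    unfolding del_def by auto
qed

lemma d2_lower: "norm (2 - g + of_nat k / 2 + of_nat t) \<ge> del"
proof -
  have e: "(2 - g + of_nat k / 2 + of_nat t) = (3 - 2*g + of_nat (k + 2*t + 1)) / 2"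
    by (simp add: field_simps)
  have "norm (2 - g + of_nat k / 2 + of_nat t) = norm (3 - 2*g + of_nat (k + 2*t + 1)) / 2"
    unfolding e norm_divide by simp
  moreover have "del * (real (k + 2*t + 1) + 1) \<le> norm (3 - 2*g + of_nat (k + 2*t + 1))" by (rule del)
  moreover have "del * 2 \<le> del * (real (k + 2*t + 1) + 1)" using del(1) by (intro mult_left_mono) auto
  ultimately show ?thesis by linarith
qed

lemma d3_lower: "norm (of_nat i + 3/2 - g + of_nat k / 2) \<ge> del * (real k + 1) / 2"
proof -
  have e: "(of_nat i + 3/2 - g + of_nat k / 2) = (3 - 2*g + of_nat (2*i + k)) / 2"
    by (simp add: field_simps)
  have "norm (of_nat i + 3/2 - g + of_nat k / 2) = norm (3 - 2*g + of_nat (2*i+k)) / 2"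
    unfolding e norm_divide by simp
  moreover have "del * (real (2*i+k) + 1) \<le> norm (3 - 2*g + of_nat (2*i+k))" by (rule del)
  moreover have "del * (real k + 1) \<le> del * (real (2*i+k) + 1)" using del(1) by (intro mult_left_mono) auto
  ultimately show ?thesis by linarith
qed

definition KK where "KK = 1 + norm (a - 1) / del"

lemma KK_nonneg: "KK \<ge> 0" unfolding KK_def using del(1) by simp

lemma rho_bound: "norm (rho g a k t) \<le> KK / (real t + 1)"
proof -
  let ?d1 = "1 + of_nat k / 2 + of_nat t :: complex"
  let ?d2 = "2 - g + of_nat k / 2 + of_nat t"
  have n1: "norm ?d1 = 1 + real k / 2 + real t"
  proof -
    have "?d1 = of_real (1 + real k / 2 + real t)" by simp
    then show ?thesis by (simp only: norm_of_real; simp)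
  qed
  have n1ge: "norm ?d1 \<ge> real t + 1" using n1 by simp
  have n2: "norm ?d2 \<ge> del" by (rule d2_lower)
  have num: "a + 1 - g + of_nat k / 2 + of_nat t = ?d2 + (a - 1)" by simp
  have "norm (rho g a k t) = norm (?d2 + (a - 1)) / (norm ?d1 * norm ?d2)"
    unfolding rho_def num by (simp add: norm_divide norm_mult)
  also have "\<dots> \<le> (norm ?d2 + norm (a - 1)) / (norm ?d1 * norm ?d2)"
    using del(1) n2 n1ge by (intro divide_right_mono norm_triangle_ineq) auto
  also have "\<dots> = 1 / norm ?d1 + norm (a - 1) / (norm ?d1 * norm ?d2)"
  proof -
    have X: "(D + B)/(C*D) = 1/C + B/(C*D)" if "C > 0" "D > 0" for C D B::real
      using that by (simp add: field_simps)
    show ?thesis by (rule X) (use del(1) n2 n1ge in linarith)+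
  qed
  also have "\<dots> \<le> 1 / (real t + 1) + norm (a - 1) / ((real t + 1) * del)"
  proof (rule add_mono)
    have n1p: "norm ?d1 > 0" using n1ge by (smt (verit) of_nat_0_le_iff)
    show "1 / norm ?d1 \<le> 1 / (real t + 1)" using n1ge n1p by (intro divide_left_mono) auto
    have "(real t + 1) * del \<le> norm ?d1 * norm ?d2"
      using n1ge n2 del(1) by (intro mult_mono) auto
    moreover have "0 < (real t + 1) * del" using del(1) by simp
    ultimately show "norm (a - 1) / (norm ?d1 * norm ?d2) \<le> norm (a - 1) / ((real t + 1) * del)"
      by (intro divide_left_mono) (auto intro!: mult_pos_pos)
  qed
  also have "\<dots> = KK / (real t + 1)"
  proof -
    have X: "1/T + B/(T*D) = (1 + B/D)/T" if "T > 0" "D > 0" for T D B::real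
      using that by (simp add: field_simps)
    show ?thesis unfolding KK_def by (rule X) (use del(1) in auto)
  qed
  finally show ?thesis .
qed

definition PH where "PH = 2 * (1 + 2 * norm (1/2 - g + w/2)) / del"

lemma PH_nonneg: "PH \<ge> 0" unfolding PH_def using del(1) by simp

lemma fac_bound: "norm (RW_fac g w k i) \<le> PH / (real k + 1)"
proof -
  let ?d1 = "of_nat i + 1/2 + of_nat k / 2 :: complex"
  let ?d3 = "of_nat i + 3/2 - g + of_nat k / 2"
  let ?c = "1/2 - g + w/2"
  have n1: "norm ?d1 = real i + 1/2 + real k / 2"
  proof -
    have "?d1 = of_real (real i + 1/2 + real k / 2)" by simp
    then show ?thesis by (simp only: norm_of_real; simp)
  qed
  have n1ge: "norm ?d1 \<ge> 1/2" using n1 by simp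
  have n3: "norm ?d3 \<ge> del * (real k + 1) / 2" by (rule d3_lower)
  have n3p: "del * (real k + 1) / 2 > 0" using del(1) by simp
  have num: "of_nat i + 1 - g + w / 2 + of_nat k / 2 = ?d1 + ?c" by simp
  have "norm (RW_fac g w k i) = norm (?d1 + ?c) / (norm ?d1 * norm ?d3)"
    unfolding RW_fac_def num by (simp add: norm_divide norm_mult)
  also have "\<dots> \<le> (norm ?d1 + norm ?c) / (norm ?d1 * norm ?d3)"
    using n3 n3p n1ge by (intro divide_right_mono norm_triangle_ineq) auto
  also have "\<dots> = (1 + norm ?c / norm ?d1) / norm ?d3"
  proof -
    have X: "(C + B)/(C*D) = (1 + B/C)/D" if "C > 0" "D > 0" for C D B::real
      using that by (simp add: field_simps)
    show ?thesis by (rule X) (use n3 n3p n1ge in linarith)+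
  qed
  also have "\<dots> \<le> (1 + 2 * norm ?c) / (del * (real k + 1) / 2)"
  proof (intro frac_le)
    have "norm ?c / norm ?d1 \<le> norm ?c / (1/2)" by (rule divide_left_mono) (use n1ge in auto)
    then show "1 + norm ?c / norm ?d1 \<le> 1 + 2 * norm ?c" by simp
  qed (use n3 n3p in auto)
  also have "\<dots> = PH / (real k + 1)" unfolding PH_def using del(1) by (simp add: field_simps)
  finally show ?thesis .
qed

end

lemma binom_fact_sum:
  fixes x y :: real
  shows "(x + y)^J / fact J = (\<Sum>i\<le>J. x^i * y^(J-i) / (fact i * fact (J-i)))"
proof -
  have "(x + y)^J / fact J = (\<Sum>i\<le>J. of_nat (J choose i) * x^i * y^(J-i)) / fact J"
    by (simp add: binomial_ring)
  also have "\<dots> = (\<Sum>i\<le>J. of_nat (J choose i) * x^i * y^(J-i) / fact J)"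
    by (simp add: sum_divide_distrib)
  also have "\<dots> = (\<Sum>i\<le>J. x^i * y^(J-i) / (fact i * fact (J-i)))"
  proof (rule sum.cong[OF refl])
    fix i assume "i \<in> {..J}"
    then have "i \<le> J" by simp
    then show "of_nat (J choose i) * x^i * y^(J-i) / fact J = x^i * y^(J-i) / (fact i * fact (J-i))"
      by (simp add: binomial_fact field_simps)
  qed
  finally show ?thesis .
qed

fun PP :: "complex \<Rightarrow> complex \<Rightarrow> complex \<Rightarrow> nat \<Rightarrow> nat \<Rightarrow> complex" where
  "PP g a w 0 J = RW_A g a J"
| "PP g a w (Suc n) J = (\<Sum>i\<le>J. RW_fac g w n i * PP g a w n i * RW_ratio g a (Suc n) i J)"

context params begin

lemma poch_nz: "pochhammer (2 - g + of_nat k / 2) j \<noteq> 0" "pochhammer (1 + of_nat k / 2 :: complex) j \<noteq> 0"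
proof -
  show "pochhammer (2 - g + of_nat k / 2) j \<noteq> 0"
  proof
    assume "pochhammer (2 - g + of_nat k / 2) j = 0"
    then obtain t where "2 - g + of_nat k / 2 = - of_nat t" by (auto simp: pochhammer_eq_0_iff)
    then have "2 - g + of_nat k / 2 + of_nat t = 0" by (simp add: algebra_simps)
    with d2_lower[of k t] del(1) show False by simp
  qed
  show "pochhammer (1 + of_nat k / 2 :: complex) j \<noteq> 0"
  proof
    assume "pochhammer (1 + of_nat k / 2 :: complex) j = 0"
    then obtain t where "1 + of_nat k / 2 = - (of_nat t :: complex)" by (auto simp: pochhammer_eq_0_iff)
    then have "Re (1 + of_nat k / 2) = Re (- (of_nat t :: complex))" by simp
    then have "(1 + real k / 2 + real t) = 0" by simp
    moreover have "real k \<ge> 0" "real t \<ge> 0" by simp_all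
    ultimately show False by linarith
  qed
qed

lemma ratio_refl: "RW_ratio g a k i i = 1"
  unfolding RW_ratio_def pqt_def using poch_nz[of k i] by simp

lemma ratio_Suc: assumes "i \<le> j"
  shows "RW_ratio g a k i (Suc j) = RW_ratio g a k i j * rho g a k j"
proof -
  have n1: "pochhammer (2 - g + of_nat k / 2) j \<noteq> 0" "pochhammer (1 + of_nat k / 2 :: complex) j \<noteq> 0"
    by (rule poch_nz)+
  have n2: "2 - g + of_nat k / 2 + of_nat j \<noteq> 0"
    using d2_lower[of k j] del(1) by auto
  have n3: "1 + of_nat k / 2 + of_nat j \<noteq> (0::complex)"
  proof
    assume "1 + of_nat k / 2 + of_nat j = (0::complex)"
    then have "Re (1 + of_nat k / 2 + of_nat j) = Re (0::complex)" by simp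
    then have "(1 + real k / 2 + real j) = 0" by simp
    moreover have "real k \<ge> 0" "real j \<ge> 0" by simp_all
    ultimately show False by linarith
  qed
  have X: "(x1*x2*x3*x4)/(x5*x6*(x7*x8)) = (x1*x3*x4/(x5*x7)) * (x2/(x6*x8))" for x1 x2 x3 x4 x5 x6 x7 x8 :: complex
    by (simp add: divide_inverse mult_ac)
  show ?thesis
    unfolding RW_ratio_def pqt_def rho_def pochhammer_Suc prod.atLeastLessThan_Suc[OF assms]
    by (simp only: X add.assoc)
qed

lemma ratio_bound: "norm (RW_ratio g a k i (i + d)) \<le> KK^d / fact d"
proof (induction d)
  case 0 then show ?case by (simp add: ratio_refl)
next
  case (Suc d)
  have "norm (RW_ratio g a k i (i + Suc d)) = norm (RW_ratio g a k i (i + d)) * norm (rho g a k (i + d))"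
    using ratio_Suc[of i "i+d" k] by (simp add: norm_mult)
  also have "\<dots> \<le> (KK^d / fact d) * (KK / (real (i + d) + 1))"
    using Suc.IH rho_bound[of k "i+d"] KK_nonneg by (intro mult_mono) auto
  also have "\<dots> \<le> (KK^d / fact d) * (KK / (real d + 1))"
    using KK_nonneg by (intro mult_left_mono divide_left_mono) auto
  also have "\<dots> = KK^Suc d / fact (Suc d)" by (simp add: field_simps)
  finally show ?case .
qed

lemma A_ratio: "RW_A g a J = RW_ratio g a 0 0 J"
  unfolding RW_A_def RW_ratio_def pqt_def by (simp add: pochhammer_prod)

lemma PP_bound: "norm (PP g a w n J) \<le> PH^n / fact n * (real (n+1) * KK)^J / fact J"
proof (induction n arbitrary: J)
  case 0
  show ?case using ratio_bound[of 0 0 J] by (simp add: A_ratio)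
next
  case (Suc n)
  let ?x = "real (n+1) * KK"
  have "norm (PP g a w (Suc n) J) \<le> (\<Sum>i\<le>J. norm (RW_fac g w n i * PP g a w n i * RW_ratio g a (Suc n) i J))"
    by (simp add: norm_sum)
  also have "\<dots> \<le> (\<Sum>i\<le>J. (PH / (real n + 1)) * (PH^n / fact n * ?x^i / fact i) * (KK^(J-i) / fact (J-i)))"
  proof (rule sum_mono)
    fix i assume "i \<in> {..J}"
    then have iJ: "J = i + (J - i)" by simp
    have r: "norm (RW_ratio g a (Suc n) i J) \<le> KK^(J-i) / fact (J-i)"
      using ratio_bound[of "Suc n" i "J-i"] iJ by simp
    show "norm (RW_fac g w n i * PP g a w n i * RW_ratio g a (Suc n) i J)
        \<le> (PH / (real n + 1)) * (PH^n / fact n * ?x^i / fact i) * (KK^(J-i) / fact (J-i))"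
      unfolding norm_mult
      using fac_bound[of n i] Suc.IH[of i] r PH_nonneg KK_nonneg
      by (intro mult_mono) (auto intro!: mult_nonneg_nonneg)
  qed
  also have "\<dots> = PH^(Suc n) / fact (Suc n) * (\<Sum>i\<le>J. ?x^i * KK^(J-i) / (fact i * fact (J-i)))"
    by (simp add: sum_distrib_left field_simps)
  also have "\<dots> = PH^(Suc n) / fact (Suc n) * ((?x + KK)^J / fact J)"
    by (simp add: binom_fact_sum)
  also have "\<dots> = PH^(Suc n) / fact (Suc n) * (real (Suc n + 1) * KK)^J / fact J"
    by (simp add: algebra_simps)
  finally show ?case .
qed

end

context params begin

lemma PP_series: "summable (\<lambda>i. PP g a w n i * z^i) \<and> summable (\<lambda>i. norm (PP g a w n i * z^i))
   \<and> norm (\<Sum>i. PP g a w n i * z^i) \<le> PH^n / fact n * exp (real (n+1) * KK * norm z)"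
proof -
  have "norm (PP g a w n i * z^i) \<le> PH^n / fact n * (real (n+1) * KK * norm z)^i / fact i" for i
  proof -
    have "norm (PP g a w n i * z^i) = norm (PP g a w n i) * norm z^i" by (simp add: norm_mult norm_power)
    also have "\<dots> \<le> (PH^n / fact n * (real (n+1) * KK)^i / fact i) * norm z^i"
      by (intro mult_right_mono PP_bound) auto
    also have "\<dots> = PH^n / fact n * (real (n+1) * KK * norm z)^i / fact i"
      by (simp add: power_mult_distrib)
    finally show ?thesis .
  qed
  from exp_bound[OF _ _ this] PH_nonneg KK_nonneg show ?thesis by auto
qed

lemma V_bound: "\<exists>C\<ge>0. \<forall>i. norm (RW_in g a w z n m i) \<le> C * norm z ^ i"
proof (induction m)
  case 0
  have "norm (RW_in g a w z n 0 i) \<le> exp (KK * norm z) * norm z ^ i" for i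
  proof -
    have b: "norm (RW_ratio g a n i (i + j) * z ^ (i + j)) \<le> norm z ^ i * (KK * norm z)^j / fact j" for j
    proof -
      have "norm (RW_ratio g a n i (i + j) * z ^ (i + j)) = norm (RW_ratio g a n i (i + j)) * (norm z ^ i * norm z^j)"
        by (simp add: norm_mult norm_power power_add)
      also have "\<dots> \<le> (KK^j / fact j) * (norm z ^ i * norm z^j)"
        by (intro mult_right_mono ratio_bound) simp
      also have "\<dots> = norm z ^ i * (KK * norm z)^j / fact j" by (simp add: power_mult_distrib)
      finally show ?thesis .
    qed
    from exp_bound[OF _ _ b] KK_nonneg show ?thesis by (simp add: mult_ac)
  qed
  then show ?case by (intro exI[of _ "exp (KK * norm z)"]) auto
next
  case (Suc m)
  then obtain C where C: "C \<ge> 0" "\<And>i. norm (RW_in g a w z n m i) \<le> C * norm z ^ i" by blast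
  have "norm (RW_in g a w z n (Suc m) i) \<le> (PH * C * exp (KK * norm z)) * norm z ^ i" for i
  proof -
    let ?k = "n - Suc m"
    have b: "norm (RW_fac g w ?k (i + j) * RW_ratio g a ?k i (i + j) * RW_in g a w z n m (i + j))
       \<le> (PH * C * norm z ^ i) * (KK * norm z)^j / fact j" for j
    proof -
      have f: "norm (RW_fac g w ?k (i + j)) \<le> PH"
        using fac_bound[of ?k "i+j"] PH_nonneg
        using divide_left_mono[of 1 "real ?k + 1" PH] by simp
      have "norm (RW_fac g w ?k (i + j) * RW_ratio g a ?k i (i + j) * RW_in g a w z n m (i + j))
          \<le> PH * (KK^j / fact j) * (C * norm z ^ (i+j))"
        unfolding norm_mult using f ratio_bound[of ?k i j] C(2)[of "i+j"] C(1) PH_nonneg KK_nonneg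
        by (intro mult_mono) (auto intro!: mult_nonneg_nonneg)
      also have "\<dots> = (PH * C * norm z ^ i) * (KK * norm z)^j / fact j"
        by (simp add: power_mult_distrib power_add)
      finally show ?thesis .
    qed
    from exp_bound[OF _ _ b] KK_nonneg PH_nonneg C(1) show ?thesis by (simp add: mult_ac)
  qed
  then show ?case using PH_nonneg C(1) by (intro exI[of _ "PH * C * exp (KK * norm z)"]) auto
qed

lemma level_summable0: "summable (\<lambda>j. RW_ratio g a n i (i + j) * z ^ (i + j))"
proof -
  have b: "norm (RW_ratio g a n i (i + j) * z ^ (i + j)) \<le> norm z ^ i * (KK * norm z)^j / fact j" for j
  proof -
    have "norm (RW_ratio g a n i (i + j) * z ^ (i + j)) = norm (RW_ratio g a n i (i + j)) * (norm z ^ i * norm z^j)"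
      by (simp add: norm_mult norm_power power_add)
    also have "\<dots> \<le> (KK^j / fact j) * (norm z ^ i * norm z^j)"
      by (intro mult_right_mono ratio_bound) simp
    also have "\<dots> = norm z ^ i * (KK * norm z)^j / fact j" by (simp add: power_mult_distrib)
    finally show ?thesis .
  qed
  from exp_bound[OF _ _ b] KK_nonneg show ?thesis by simp
qed

lemma level_summable: "summable (\<lambda>j. RW_fac g w k (i + j) * RW_ratio g a k i (i + j) * RW_in g a w z n m (i + j))"
proof -
  obtain C where C: "C \<ge> 0" "\<And>i. norm (RW_in g a w z n m i) \<le> C * norm z ^ i" using V_bound by blast
  have b: "norm (RW_fac g w k (i + j) * RW_ratio g a k i (i + j) * RW_in g a w z n m (i + j))
       \<le> (PH * C * norm z ^ i) * (KK * norm z)^j / fact j" for j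
  proof -
    have f: "norm (RW_fac g w k (i + j)) \<le> PH"
      using fac_bound[of k "i+j"] PH_nonneg
      using divide_left_mono[of 1 "real k + 1" PH] by simp
    have "norm (RW_fac g w k (i + j) * RW_ratio g a k i (i + j) * RW_in g a w z n m (i + j))
        \<le> PH * (KK^j / fact j) * (C * norm z ^ (i+j))"
      unfolding norm_mult using f ratio_bound[of k i j] C(2)[of "i+j"] C(1) PH_nonneg KK_nonneg
      by (intro mult_mono) (auto intro!: mult_nonneg_nonneg)
    also have "\<dots> = (PH * C * norm z ^ i) * (KK * norm z)^j / fact j"
      by (simp add: power_mult_distrib power_add)
    finally show ?thesis .
  qed
  from exp_bound[OF _ _ b] KK_nonneg PH_nonneg C(1) show ?thesis by simp
qed

end

context params begin

lemma tri_abs: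
  fixes f :: "nat \<Rightarrow> nat \<Rightarrow> complex" and u v :: "nat \<Rightarrow> real"
  assumes "\<And>i j. norm (f i (i+j)) \<le> u i * v j" "\<And>i. u i \<ge> 0" "\<And>j. v j \<ge> 0"
    "summable u" "summable v"
  shows "(\<lambda>(i,j). f i (i+j)) summable_on UNIV"
proof -
  have p: "(\<lambda>(i,j). u i * v j) summable_on UNIV" by (rule product_summable_on) (use assms in auto)
  have "(\<lambda>x. norm ((\<lambda>(i,j). f i (i+j)) x)) summable_on UNIV"
    by (rule Infinite_Sum.abs_summable_on_comparison_test'[where g="\<lambda>(i,j). u i * v j"])
       (use p assms in \<open>auto simp: abs_mult\<close>)
  then show ?thesis using summable_on_iff_abs_summable_on_complex by fastforce
qed

lemma swap:
  assumes "m < n"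
  shows "summable (\<lambda>i. RW_fac g w (n-m-1) i * PP g a w (n-m-1) i * RW_in g a w z n m i)
     \<and> (\<Sum>i. RW_fac g w (n-m-1) i * PP g a w (n-m-1) i * RW_in g a w z n m i) = (\<Sum>J. PP g a w n J * z^J)"
  using assms
proof (induction m)
  case 0
  let ?k = "n - 1"
  define f where "f i J = RW_fac g w ?k i * PP g a w ?k i * (RW_ratio g a n i J * z^J)" for i J
  define u where "u i = PH * norm (PP g a w ?k i * z^i)" for i
  define v where "v j = (KK * norm z)^j / fact j" for j
  have sv: "summable v" unfolding v_def using summable_exp[of "KK * norm z"] by (simp add: divide_inverse mult_ac)
  have su: "summable u" unfolding u_def using PP_series[of ?k z] by (intro summable_mult) auto
  have bnd: "norm (f i (i+j)) \<le> u i * v j" for i j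
  proof -
    have f1: "norm (RW_fac g w ?k i) \<le> PH" using fac_bound[of ?k i] PH_nonneg
      using divide_left_mono[of 1 "real ?k + 1" PH] by simp
    have "norm (f i (i+j)) = norm (RW_fac g w ?k i) * (norm (PP g a w ?k i) * norm z^i) * (norm (RW_ratio g a n i (i+j)) * norm z^j)"
      unfolding f_def by (simp add: norm_mult norm_power power_add mult_ac)
    also have "\<dots> \<le> PH * (norm (PP g a w ?k i) * norm z^i) * ((KK^j / fact j) * norm z^j)"
      using f1 ratio_bound[of n i j] PH_nonneg KK_nonneg by (intro mult_mono) auto
    also have "\<dots> = u i * v j" unfolding u_def v_def by (simp add: norm_mult norm_power power_mult_distrib)
    finally show ?thesis .
  qed
  have summ: "(\<lambda>(i,j). f i (i+j)) summable_on UNIV"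
    by (rule tri_abs[OF bnd _ _ su sv]) (use PH_nonneg KK_nonneg in \<open>auto simp: u_def v_def\<close>)
  note T = triangle_fubini[OF summ]
  have e1: "(\<Sum>j. f i (i+j)) = RW_fac g w (n-0-1) i * PP g a w (n-0-1) i * RW_in g a w z n 0 i" for i
    unfolding f_def using level_summable0[of n i z] by (simp add: suminf_mult)
  have nn: "n = Suc ?k" using 0 by simp
  have e2: "(\<Sum>i\<le>J. f i J) = PP g a w n J * z^J" for J
  proof -
    have X: "PP g a w (Suc ?k) J = (\<Sum>i\<le>J. RW_fac g w ?k i * PP g a w ?k i * RW_ratio g a (Suc ?k) i J)"
      by (simp only: PP.simps)
    have "PP g a w n J = (\<Sum>i\<le>J. RW_fac g w ?k i * PP g a w ?k i * RW_ratio g a n i J)"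
      using X by (simp only: nn[symmetric])
    then show ?thesis unfolding f_def by (simp add: sum_distrib_left sum_distrib_right mult_ac)
  qed
  show ?case using T unfolding e1 e2 by simp
next
  case (Suc m)
  let ?k = "n - Suc m"
  let ?kz = "n - Suc m - 1"
  have km: "?k = Suc ?kz" "n - m - 1 = ?k" using Suc.prems by arith+
  obtain C where C: "C \<ge> 0" "\<And>i. norm (RW_in g a w z n m i) \<le> C * norm z ^ i" using V_bound by blast
  define f where "f i J = RW_fac g w ?kz i * PP g a w ?kz i * (RW_fac g w ?k J * RW_ratio g a ?k i J * RW_in g a w z n m J)" for i J
  define u where "u i = PH * norm (PP g a w ?kz i * z^i)" for i
  define v where "v j = PH * C * (KK * norm z)^j / fact j" for j
  have sv: "summable v" unfolding v_def using summable_mult[OF summable_exp[of "KK * norm z"], of "PH * C"]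
    by (simp add: divide_inverse mult_ac)
  have su: "summable u" unfolding u_def using PP_series[of ?kz z] by (intro summable_mult) auto
  have bnd: "norm (f i (i+j)) \<le> u i * v j" for i j
  proof -
    have f1: "norm (RW_fac g w ?kz i) \<le> PH" using fac_bound[of ?kz i] PH_nonneg
      using divide_left_mono[of 1 "real ?kz + 1" PH] by simp
    have f2: "norm (RW_fac g w ?k (i+j)) \<le> PH" using fac_bound[of ?k "i+j"] PH_nonneg
      using divide_left_mono[of 1 "real ?k + 1" PH] by simp
    have "norm (f i (i+j)) = norm (RW_fac g w ?kz i) * (norm (PP g a w ?kz i)) * (norm (RW_fac g w ?k (i+j)) * norm (RW_ratio g a ?k i (i+j)) * norm (RW_in g a w z n m (i+j)))"
      unfolding f_def by (simp add: norm_mult mult_ac)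
    also have "\<dots> \<le> PH * (norm (PP g a w ?kz i)) * (PH * (KK^j / fact j) * (C * norm z ^ (i+j)))"
      using f1 f2 ratio_bound[of ?k i j] C PH_nonneg KK_nonneg
      by (intro mult_mono) (auto intro!: mult_nonneg_nonneg)
    also have "\<dots> = u i * v j" unfolding u_def v_def by (simp add: norm_mult norm_power power_mult_distrib power_add mult_ac)
    finally show ?thesis .
  qed
  have summ: "(\<lambda>(i,j). f i (i+j)) summable_on UNIV"
    by (rule tri_abs[OF bnd _ _ su sv]) (use PH_nonneg KK_nonneg C(1) in \<open>auto simp: u_def v_def\<close>)
  note T = triangle_fubini[OF summ]
  have e1: "(\<Sum>j. f i (i+j)) = RW_fac g w (n - Suc m - 1) i * PP g a w (n - Suc m - 1) i * RW_in g a w z n (Suc m) i" for i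
    unfolding f_def using level_summable[of ?k i z n m] by (simp add: suminf_mult)
  have e2: "(\<Sum>i\<le>J. f i J) = RW_fac g w (n-m-1) J * PP g a w (n-m-1) J * RW_in g a w z n m J" for J
  proof -
    have "PP g a w (n-m-1) J = PP g a w (Suc ?kz) J" using km by simp
    also have "\<dots> = (\<Sum>i\<le>J. RW_fac g w ?kz i * PP g a w ?kz i * RW_ratio g a ?k i J)" using km by simp
    finally show ?thesis unfolding f_def km(2) by (simp add: sum_distrib_left sum_distrib_right mult_ac)
  qed
  have IH: "(\<Sum>i. RW_fac g w (n-m-1) i * PP g a w (n-m-1) i * RW_in g a w z n m i) = (\<Sum>J. PP g a w n J * z^J)"
    using Suc.IH Suc.prems by simp
  show ?case using T IH unfolding e1 e2 by simp
qed

end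

context params begin

lemma term_eq: assumes "n \<ge> 1"
  shows "RW_term g a w z n = (\<Sum>J. PP g a w n J * z^J)"
    "summable (\<lambda>i. RW_fac g w 0 i * RW_A g a i * RW_in g a w z n (n - 1) i)"
proof -
  have m: "n - 1 < n" "n - (n - 1) - 1 = 0" using assms by auto
  note S = swap[OF m(1), of z]
  show "RW_term g a w z n = (\<Sum>J. PP g a w n J * z^J)"
    using S unfolding m(2) RW_term_def by simp
  show "summable (\<lambda>i. RW_fac g w 0 i * RW_A g a i * RW_in g a w z n (n - 1) i)"
    using S unfolding m(2) by simp
qed

lemma fam_summable: "(\<lambda>(n,J). PP g a w n J * z^J * e^n) summable_on UNIV"
proof -
  define b where "b = (\<lambda>(n,J). PH^n * norm e^n / fact n * (real (n+1) * KK * norm z)^J / fact J)"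
  define h where "h n = PH^n * norm e^n / fact n * exp (real (n+1) * KK * norm z)" for n
  have inner: "((\<lambda>J. b (n,J)) has_sum h n) UNIV" for n
  proof -
    have "(\<lambda>J. PH^n * norm e^n / fact n * ((real (n+1) * KK * norm z)^J / fact J)) sums h n"
      unfolding h_def using sums_mult[OF exp_converges[of "real (n+1) * KK * norm z"], of "PH^n * norm e^n / fact n"]
      by (simp add: divide_inverse mult_ac)
    then have "(\<lambda>J. b (n,J)) sums h n" unfolding b_def by (simp add: mult_ac)
    moreover have "b (n,J) \<ge> 0" for J unfolding b_def using PH_nonneg KK_nonneg by simp
    ultimately show ?thesis using sums_nonneg_imp_has_sum by blast
  qed
  have hh: "h n = exp (KK * norm z) * ((PH * norm e * exp (KK * norm z))^n / fact n)" for n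
  proof -
    have "real (n+1) * KK * norm z = KK * norm z + real n * (KK * norm z)" by (simp add: algebra_simps)
    then have ex: "exp (real (n+1) * KK * norm z) = exp (KK * norm z) * exp (KK * norm z)^n"
      by (simp add: exp_add exp_of_nat_mult)
    show ?thesis unfolding h_def ex by (simp add: power_mult_distrib divide_inverse mult_ac)
  qed
  have "summable h"
    unfolding hh using summable_mult[OF summable_exp[of "PH * norm e * exp (KK * norm z)"], of "exp (KK * norm z)"]
    by (simp add: divide_inverse mult_ac)
  moreover have "h n \<ge> 0" for n unfolding h_def using PH_nonneg by simp
  ultimately have "h summable_on UNIV" using summable_on_UNIV_nonneg_real_iff by blast
  then have bs: "b summable_on UNIV"
    using summable_on_SigmaI[where f=b and g=h and A=UNIV and B="\<lambda>_. UNIV", OF inner] PH_nonneg KK_nonneg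
    by (simp add: b_def case_prod_beta)
  have bnd: "norm ((\<lambda>(n,J). PP g a w n J * z^J * e^n) x) \<le> b x" for x
  proof (cases x)
    case (Pair n J)
    have "norm (PP g a w n J * z^J * e^n) = norm (PP g a w n J) * norm z^J * norm e^n"
      by (simp add: norm_mult norm_power)
    also have "\<dots> \<le> (PH^n / fact n * (real (n+1) * KK)^J / fact J) * norm z^J * norm e^n"
      by (intro mult_right_mono PP_bound) auto
    also have "\<dots> = b (n,J)" unfolding b_def by (simp add: power_mult_distrib)
    finally show ?thesis using Pair by simp
  qed
  have "(\<lambda>x. norm ((\<lambda>(n,J). PP g a w n J * z^J * e^n) x)) summable_on UNIV"
    by (rule Infinite_Sum.abs_summable_on_comparison_test'[OF bs]) (use bnd in auto)
  then show ?thesis using summable_on_iff_abs_summable_on_complex by fastforce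
qed

lemma braces_eq:
  "RW_converges g a w e z \<and> RW_braces g a w e z = (\<Sum>n. \<Sum>J. PP g a w n J * z^J * e^n)"
proof -
  note F = pair_fubini[OF fam_summable[of z e]]
  define T where "T n = (\<Sum>J. PP g a w n J * z^J)" for n
  have TT: "(\<Sum>J. PP g a w n J * z^J * e^n) = T n * e^n" for n
    unfolding T_def using PP_series[of n z] by (simp add: suminf_mult2)
  have sT: "summable (\<lambda>n. T n * e^n)" using F TT by simp
  have t0: "RW_term0 g a z = T 0" unfolding RW_term0_def T_def by simp
  have tn: "RW_term g a w z n = T n" if "n \<ge> 1" for n unfolding T_def using term_eq[OF that] by simp
  have s2: "summable (\<lambda>m. RW_term g a w z (m + 2) * e ^ (m + 2))"
    using summable_ignore_initial_segment[OF sT, of 2] tn by simp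
  have "(\<Sum>n. T n * e^n) = (\<Sum>m. T (m + 2) * e^(m+2)) + (\<Sum>n<2. T n * e^n)"
    by (rule suminf_split_initial_segment[OF sT])
  then have br: "RW_braces g a w e z = (\<Sum>n. T n * e^n)"
    unfolding RW_braces_def t0 using tn[of 1] tn by (simp add: numeral_2_eq_2)
  have conv: "RW_converges g a w e z"
    unfolding RW_converges_def
    using PP_series[of 0 z] term_eq(2) level_summable0 level_summable s2 by simp
  show ?thesis using conv br TT by simp
qed

end

definition cc :: "complex \<Rightarrow> complex \<Rightarrow> complex \<Rightarrow> complex \<Rightarrow> complex \<Rightarrow> nat \<Rightarrow> complex" where
  "cc g a w al be N = (\<Sum>J\<in>{J. 2*J\<le>N}. PP g a w (N-2*J) J * be^J * al^(N-2*J))"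

context params begin

lemma cc_series:
  "summable (\<lambda>N. cc g a w al be N * x^N)
   \<and> RW_braces g a w (al * x) (be * x^2) = (\<Sum>N. cc g a w al be N * x^N)"
proof -
  let ?F = "\<lambda>(n,J). PP g a w n J * (be * x^2)^J * (al * x)^n"
  note D = diag_fubini[OF fam_summable[of "be * x^2" "al * x"]]
  have fib: "(\<Sum>J\<in>{J. 2*J\<le>N}. ?F (N-2*J,J)) = cc g a w al be N * x^N" for N
  proof -
    have "(\<Sum>J\<in>{J. 2*J\<le>N}. ?F (N-2*J,J)) = (\<Sum>J\<in>{J. 2*J\<le>N}. PP g a w (N-2*J) J * be^J * al^(N-2*J) * x^N)"
    proof (rule sum.cong[OF refl])
      fix J assume "J \<in> {J. 2*J\<le>N}"
      then have "N = 2*J + (N - 2*J)" by simp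
      then have "x^N = (x^2)^J * x^(N-2*J)" by (metis power_add power_mult)
      then show "?F (N-2*J,J) = PP g a w (N-2*J) J * be^J * al^(N-2*J) * x^N"
        by (simp add: power_mult_distrib mult_ac)
    qed
    then show ?thesis unfolding cc_def by (simp add: sum_distrib_right)
  qed
  show ?thesis using D braces_eq[of "al * x" "be * x^2"] unfolding fib by simp
qed

lemma PP_rec_J: "PP g a w n (Suc J) = rho g a n J * PP g a w n J
    + (if n = 0 then 0 else RW_fac g w (n-1) (Suc J) * PP g a w (n-1) (Suc J))"
proof (cases n)
  case 0
  then show ?thesis using ratio_Suc[of 0 J 0] by (simp add: A_ratio)
next
  case (Suc m)
  have "PP g a w (Suc m) (Suc J) = (\<Sum>i\<le>J. RW_fac g w m i * PP g a w m i * RW_ratio g a (Suc m) i (Suc J))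
      + RW_fac g w m (Suc J) * PP g a w m (Suc J) * RW_ratio g a (Suc m) (Suc J) (Suc J)"
    by simp
  also have "(\<Sum>i\<le>J. RW_fac g w m i * PP g a w m i * RW_ratio g a (Suc m) i (Suc J))
      = (\<Sum>i\<le>J. RW_fac g w m i * PP g a w m i * RW_ratio g a (Suc m) i J) * rho g a (Suc m) J"
    by (simp add: sum_distrib_left sum_distrib_right ratio_Suc mult_ac)
  finally show ?thesis using Suc by (simp add: ratio_refl mult_ac)
qed

lemma PP_rec_n: "PP g a w (Suc n) 0 = RW_fac g w n 0 * PP g a w n 0"
  by (simp add: ratio_refl)

lemma PP_00: "PP g a w 0 0 = 1" by (simp add: RW_A_def)

end

context params begin

lemma rho_mul: "(2 + of_nat n + 2* of_nat J) * (4 - 2*g + of_nat n + 2* of_nat J) * rho g a n J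
   = 4 * (a + 1 - g + of_nat n/2 + of_nat J)"
proof -
  let ?d1 = "1 + of_nat n / 2 + of_nat J :: complex"
  let ?d2 = "2 - g + of_nat n / 2 + of_nat J"
  have n1: "?d1 \<noteq> 0"
  proof
    assume "?d1 = 0"
    then have "Re ?d1 = 0" by simp
    then have "1 + real n / 2 + real J = 0" by simp
    moreover have "real n \<ge> 0" "real J \<ge> 0" by simp_all
    ultimately show False by linarith
  qed
  have n2: "?d2 \<noteq> 0" using d2_lower[of n J] del(1) by auto
  have e: "(2 + of_nat n + 2* of_nat J) * (4 - 2*g + of_nat n + 2* of_nat J) = 4 * (?d1 * ?d2)"
    by (simp add: field_simps)
  show ?thesis unfolding e rho_def using n1 n2 by simp
qed

lemma fac_mul: "(2* of_nat i + 1 + of_nat k) * (2* of_nat i + 3 - 2*g + of_nat k) * RW_fac g w k i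
   = 4 * (of_nat i + 1 - g + w/2 + of_nat k/2)"
proof -
  let ?d1 = "of_nat i + 1/2 + of_nat k / 2 :: complex"
  let ?d3 = "of_nat i + 3/2 - g + of_nat k / 2"
  have n1: "?d1 \<noteq> 0"
  proof
    assume "?d1 = 0"
    then have "Re ?d1 = 0" by simp
    then have "real i + 1/2 + real k / 2 = 0" by simp
    moreover have "real i \<ge> 0" "real k \<ge> 0" by simp_all
    ultimately show False by linarith
  qed
  have n3: "?d3 \<noteq> 0"
  proof
    assume "?d3 = 0"
    with d3_lower[of k i] del(1) have "del * (real k + 1) / 2 \<le> 0" by simp
    moreover have "del * (real k + 1) / 2 > 0" using del(1) by simp
    ultimately show False by linarith
  qed
  have e: "(2* of_nat i + 1 + of_nat k) * (2* of_nat i + 3 - 2*g + of_nat k) = 4 * (?d1 * ?d3)"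
    by (simp add: field_simps)
  show ?thesis unfolding e RW_fac_def using n1 n3 by simp
qed

lemma PP_term:
  assumes "n + 2*J \<noteq> 0"
  shows "of_nat (n + 2*J) * (of_nat (n + 2*J) + (2 - 2*g)) * PP g a w n J
    = (if J > 0 then 4 * (a - g + of_nat (n + 2*J) / 2) * PP g a w n (J-1) else 0)
    + (if n > 0 then 4 * (of_nat (n + 2*J) / 2 + 1/2 - g + w/2) * PP g a w (n-1) J else 0)"
proof (cases J)
  case (Suc J')
  have r: "of_nat (n + 2*J) * (of_nat (n + 2*J) + (2 - 2*g)) * rho g a n J' = 4 * (a - g + of_nat (n + 2*J) / 2)"
  proof -
    have "of_nat (n + 2*J) * (of_nat (n + 2*J) + (2 - 2*g)) = (2 + of_nat n + 2* of_nat J') * (4 - 2*g + of_nat n + 2* of_nat J')"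
      using Suc by (simp add: algebra_simps)
    moreover have "4 * (a + 1 - g + of_nat n/2 + of_nat J') = 4 * (a - g + of_nat (n + 2*J) / 2)"
      using Suc by (simp add: field_simps)
    ultimately show ?thesis using rho_mul[of n J'] by simp
  qed
  show ?thesis
  proof (cases n)
    case 0
    then show ?thesis using Suc r PP_rec_J[of n J'] by (simp add: mult_ac)
  next
    case (Suc n')
    have f: "of_nat (n + 2*J) * (of_nat (n + 2*J) + (2 - 2*g)) * RW_fac g w n' (Suc J')
        = 4 * (of_nat (n + 2*J) / 2 + 1/2 - g + w/2)"
    proof -
      have "of_nat (n + 2*J) * (of_nat (n + 2*J) + (2 - 2*g)) = (2* of_nat (Suc J') + 1 + of_nat n') * (2* of_nat (Suc J') + 3 - 2*g + of_nat n')"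
        using Suc \<open>J = Suc J'\<close> by (simp add: algebra_simps)
      moreover have "4 * (of_nat (Suc J') + 1 - g + w/2 + of_nat n'/2) = 4 * (of_nat (n + 2*J) / 2 + 1/2 - g + w/2)"
        using Suc \<open>J = Suc J'\<close> by (simp add: field_simps)
      ultimately show ?thesis using fac_mul[of "Suc J'" n'] by simp
    qed
    have "PP g a w n J = rho g a n J' * PP g a w n J' + RW_fac g w n' (Suc J') * PP g a w n' (Suc J')"
      using PP_rec_J[of n J'] Suc \<open>J = Suc J'\<close> by simp
    then show ?thesis using r f Suc \<open>J = Suc J'\<close> by (simp del: PP.simps add: distrib_left mult.assoc[symmetric])
  qed
next
  case 0
  then obtain n' where n': "n = Suc n'" using assms by (cases n) auto
  have f: "of_nat (n + 2*J) * (of_nat (n + 2*J) + (2 - 2*g)) * RW_fac g w n' 0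
        = 4 * (of_nat (n + 2*J) / 2 + 1/2 - g + w/2)"
  proof -
    have "of_nat (n + 2*J) * (of_nat (n + 2*J) + (2 - 2*g)) = (2* of_nat 0 + 1 + of_nat n') * (2* of_nat 0 + 3 - 2*g + of_nat n')"
      using n' 0 by (simp add: algebra_simps)
    moreover have "4 * (of_nat 0 + 1 - g + w/2 + of_nat n'/2) = 4 * (of_nat (n + 2*J) / 2 + 1/2 - g + w/2)"
      using n' 0 by (simp add: field_simps)
    ultimately show ?thesis using fac_mul[of 0 n'] by simp
  qed
  have p: "PP g a w n J = RW_fac g w n' 0 * PP g a w n' 0" using PP_rec_n[of n'] n' 0 by simp
  show ?thesis unfolding p using f n' 0 by (simp del: PP.simps add: mult.assoc[symmetric])
qed

end

lemma finS: "finite {J::nat. 2*J \<le> N}" by (rule finite_subset[of _ "{..N}"]) auto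

lemma sum_shift1: fixes M :: nat assumes "M \<ge> 2"
  shows "(\<Sum>J\<in>{J. 2*J\<le>M}. (if 0 < J then h J else (0::complex))) = (\<Sum>J\<in>{J. 2*J\<le>M-2}. h (Suc J))"
proof -
  have "(\<Sum>J\<in>{J. 2*J\<le>M}. (if 0 < J then h J else (0::complex))) = (\<Sum>J\<in>{J\<in>{J. 2*J\<le>M}. 0 < J}. h J)"
    by (rule sum.inter_filter[symmetric, OF finS])
  also have "{J\<in>{J. 2*J\<le>M}. 0 < J} = Suc ` {J. 2*J\<le>M-2}"
  proof (intro set_eqI iffI)
    fix x assume "x \<in> {J\<in>{J. 2*J\<le>M}. 0 < J}"
    then have "x = Suc (x - 1)" "2*(x-1) \<le> M-2" by auto
    then show "x \<in> Suc ` {J. 2*J\<le>M-2}" by blast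
  next
    fix x assume "x \<in> Suc ` {J. 2*J\<le>M-2}"
    then show "x \<in> {J\<in>{J. 2*J\<le>M}. 0 < J}" using assms by auto
  qed
  also have "(\<Sum>J\<in>Suc ` {J. 2*J\<le>M-2}. h J) = (\<Sum>J\<in>{J. 2*J\<le>M-2}. h (Suc J))"
    by (simp add: sum.reindex)
  finally show ?thesis .
qed

lemma sum_shift2: fixes M :: nat assumes "M \<ge> 1"
  shows "(\<Sum>J\<in>{J. 2*J\<le>M}. (if 0 < M - 2*J then h J else (0::complex))) = (\<Sum>J\<in>{J. 2*J\<le>M-1}. h J)"
proof -
  have "(\<Sum>J\<in>{J. 2*J\<le>M}. (if 0 < M - 2*J then h J else (0::complex))) = (\<Sum>J\<in>{J\<in>{J. 2*J\<le>M}. 0 < M - 2*J}. h J)"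
    by (rule sum.inter_filter[symmetric, OF finS])
  also have "{J\<in>{J. 2*J\<le>M}. 0 < M - 2*J} = {J. 2*J\<le>M-1}" using assms by auto
  finally show ?thesis .
qed

context params begin

lemma cc_rec: assumes "M \<ge> 1"
  shows "of_nat M * (of_nat M + (2 - 2*g)) * cc g a w al be M
    = (if M \<ge> 2 then 4 * (a - g + of_nat M / 2) * be * cc g a w al be (M-2) else 0)
      + 4 * (of_nat M / 2 + 1/2 - g + w/2) * al * cc g a w al be (M-1)"
proof -
  let ?A = "4 * (a - g + of_nat M / 2)"
  let ?B = "4 * (of_nat M / 2 + 1/2 - g + w/2)"
  have "of_nat M * (of_nat M + (2 - 2*g)) * cc g a w al be M
      = (\<Sum>J\<in>{J. 2*J\<le>M}. (of_nat M * (of_nat M + (2 - 2*g)) * PP g a w (M-2*J) J) * be^J * al^(M-2*J))"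
    unfolding cc_def by (simp add: sum_distrib_left mult_ac)
  also have "\<dots> = (\<Sum>J\<in>{J. 2*J\<le>M}. (if 0 < J then ?A * PP g a w (M-2*J) (J-1) * be^J * al^(M-2*J) else 0)
      + (if 0 < M - 2*J then ?B * PP g a w (M-2*J-1) J * be^J * al^(M-2*J) else 0))"
  proof (rule sum.cong[OF refl])
    fix J assume "J \<in> {J. 2*J\<le>M}"
    then have e: "M - 2*J + 2*J = M" by simp
    have "M - 2*J + 2*J \<noteq> 0" using assms e by simp
    note T = PP_term[OF this]
    show "(of_nat M * (of_nat M + (2 - 2*g)) * PP g a w (M-2*J) J) * be^J * al^(M-2*J)
      = (if 0 < J then ?A * PP g a w (M-2*J) (J-1) * be^J * al^(M-2*J) else 0)
      + (if 0 < M - 2*J then ?B * PP g a w (M-2*J-1) J * be^J * al^(M-2*J) else 0)"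
      using T unfolding e by (simp del: PP.simps add: distrib_right)
  qed
  also have "\<dots> = (\<Sum>J\<in>{J. 2*J\<le>M}. (if 0 < J then ?A * PP g a w (M-2*J) (J-1) * be^J * al^(M-2*J) else 0))
      + (\<Sum>J\<in>{J. 2*J\<le>M}. (if 0 < M - 2*J then ?B * PP g a w (M-2*J-1) J * be^J * al^(M-2*J) else 0))"
    by (rule sum.distrib)
  also have "(\<Sum>J\<in>{J. 2*J\<le>M}. (if 0 < M - 2*J then ?B * PP g a w (M-2*J-1) J * be^J * al^(M-2*J) else 0))
      = ?B * al * cc g a w al be (M-1)"
  proof -
    have "(\<Sum>J\<in>{J. 2*J\<le>M}. (if 0 < M - 2*J then ?B * PP g a w (M-2*J-1) J * be^J * al^(M-2*J) else 0))
       = (\<Sum>J\<in>{J. 2*J\<le>M-1}. ?B * PP g a w (M-2*J-1) J * be^J * al^(M-2*J))"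
      by (rule sum_shift2[OF assms])
    also have "\<dots> = (\<Sum>J\<in>{J. 2*J\<le>M-1}. ?B * al * (PP g a w (M-1-2*J) J * be^J * al^(M-1-2*J)))"
    proof (rule sum.cong[OF refl])
      fix J assume "J \<in> {J. 2*J\<le>M-1}"
      then have e: "M-2*J = Suc (M-1-2*J)" "M-2*J-1 = M-1-2*J" using assms by auto
      show "?B * PP g a w (M-2*J-1) J * be^J * al^(M-2*J) = ?B * al * (PP g a w (M-1-2*J) J * be^J * al^(M-1-2*J))"
        unfolding e by (simp del: PP.simps add: mult_ac)
    qed
    also have "\<dots> = ?B * al * cc g a w al be (M-1)" unfolding cc_def by (simp add: sum_distrib_left)
    finally show ?thesis .
  qed
  also have "(\<Sum>J\<in>{J. 2*J\<le>M}. (if 0 < J then ?A * PP g a w (M-2*J) (J-1) * be^J * al^(M-2*J) else 0))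
      = (if M \<ge> 2 then ?A * be * cc g a w al be (M-2) else 0)"
  proof (cases "M \<ge> 2")
    case True
    have "(\<Sum>J\<in>{J. 2*J\<le>M}. (if 0 < J then ?A * PP g a w (M-2*J) (J-1) * be^J * al^(M-2*J) else 0))
       = (\<Sum>J\<in>{J. 2*J\<le>M-2}. ?A * PP g a w (M-2*Suc J) (Suc J-1) * be^Suc J * al^(M-2*Suc J))"
      by (rule sum_shift1[OF True])
    also have "\<dots> = (\<Sum>J\<in>{J. 2*J\<le>M-2}. ?A * be * (PP g a w (M-2-2*J) J * be^J * al^(M-2-2*J)))"
    proof (rule sum.cong[OF refl])
      fix J assume "J \<in> {J. 2*J\<le>M-2}"
      have e: "M-2*Suc J = M-2-2*J" by simp
      show "?A * PP g a w (M-2*Suc J) (Suc J-1) * be^Suc J * al^(M-2*Suc J) = ?A * be * (PP g a w (M-2-2*J) J * be^J * al^(M-2-2*J))"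
        unfolding e by (simp del: PP.simps add: mult_ac)
    qed
    also have "\<dots> = ?A * be * cc g a w al be (M-2)" unfolding cc_def by (simp add: sum_distrib_left)
    finally show ?thesis using True by simp
  next
    case False
    then have "M = 1" using assms by simp
    then have "{J. 2*J\<le>M} = {0}" by auto
    then show ?thesis using False by simp
  qed
  finally show ?thesis by simp
qed

end

definition sh :: "(nat \<Rightarrow> complex) \<Rightarrow> nat \<Rightarrow> complex" where
  "sh d N = (if N = 0 then 0 else d (N - 1))"

lemma sh_sums: assumes "(\<lambda>N. d N * x^N) sums S"
  shows "(\<lambda>N. sh d N * x^N) sums (x * S)"
proof -
  have "(\<lambda>N. x * (d N * x^N)) sums (x * S)" by (rule sums_mult[OF assms])
  then have "(\<lambda>N. sh d (Suc N) * x^(Suc N)) sums (x * S)" by (simp add: sh_def mult_ac)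
  then show ?thesis by (subst (asm) sums_Suc_iff) (simp add: sh_def)
qed

lemma powr_m1: fixes x s :: complex assumes "x \<noteq> 0"
  shows "x powr (s - 1) = x powr s / x"
  using assms by (simp add: powr_def left_diff_distrib exp_diff)

lemma ode_series:
  fixes c :: "nat \<Rightarrow> complex" and lam mu eps Om om :: complex
  assumes conv: "\<And>x. summable (\<lambda>N. c N * x^N)"
    and rec: "\<And>N. of_nat (N+1) * (of_nat (N+1) + lam) * c (N+1) + eps * (of_nat N + lam + om) * c N
        + (if N \<ge> 1 then (mu * (of_nat N - 1 + lam) + Om) * c (N - 1) else 0) = 0"
  defines "h \<equiv> \<lambda>x. \<Sum>N. c N * x^N"
  defines "h1 \<equiv> \<lambda>x. \<Sum>N. diffs c N * x^N"
  defines "h2 \<equiv> \<lambda>x. \<Sum>N. diffs (diffs c) N * x^N"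
  shows "x * h2 x + (lam + 1) * h1 x + (mu * x + eps) * (lam * h x + x * h1 x) + (Om * x + eps * om) * h x = 0"
proof -
  have c1: "summable (\<lambda>N. diffs c N * x^N)" for x by (rule termdiff_converges_all[OF conv])
  have c2: "summable (\<lambda>N. diffs (diffs c) N * x^N)" for x by (rule termdiff_converges_all[OF c1])
  have s0: "(\<lambda>N. c N * x^N) sums h x" unfolding h_def using conv summable_sums by blast
  have s1: "(\<lambda>N. diffs c N * x^N) sums h1 x" unfolding h1_def using c1 summable_sums by blast
  have s2: "(\<lambda>N. diffs (diffs c) N * x^N) sums h2 x" unfolding h2_def using c2 summable_sums by blast
  define q where "q N = sh (diffs (diffs c)) N + (lam + 1) * diffs c N + mu * lam * sh c N + eps * lam * c N
     + mu * sh (sh (diffs c)) N + eps * sh (diffs c) N + Om * sh c N + eps * om * c N" for N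
  have k: "(\<lambda>N. (k * d N) * x^N) sums (k * S)" if "(\<lambda>N. d N * x^N) sums S" for k d S
    using sums_mult[OF that, of k] by (simp add: mult.assoc)
  have p1: "(\<lambda>N. sh (diffs (diffs c)) N * x^N) sums (x * h2 x)" by (rule sh_sums[OF s2])
  have p2: "(\<lambda>N. ((lam + 1) * diffs c N) * x^N) sums ((lam + 1) * h1 x)" by (rule k[OF s1])
  have p3: "(\<lambda>N. (mu * lam * sh c N) * x^N) sums (mu * lam * (x * h x))" by (rule k[OF sh_sums[OF s0]])
  have p4: "(\<lambda>N. (eps * lam * c N) * x^N) sums (eps * lam * h x)" by (rule k[OF s0])
  have p5: "(\<lambda>N. (mu * sh (sh (diffs c)) N) * x^N) sums (mu * (x * (x * h1 x)))"
    by (rule k[OF sh_sums[OF sh_sums[OF s1]]])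
  have p6: "(\<lambda>N. (eps * sh (diffs c) N) * x^N) sums (eps * (x * h1 x))" by (rule k[OF sh_sums[OF s1]])
  have p7: "(\<lambda>N. (Om * sh c N) * x^N) sums (Om * (x * h x))" by (rule k[OF sh_sums[OF s0]])
  have p8: "(\<lambda>N. (eps * om * c N) * x^N) sums (eps * om * h x)" by (rule k[OF s0])
  have "(\<lambda>N. q N * x^N) sums (x * h2 x + (lam + 1) * h1 x + mu * lam * (x * h x) + eps * lam * h x
     + mu * (x * (x * h1 x)) + eps * (x * h1 x) + Om * (x * h x) + eps * om * h x)"
  proof -
    have eq: "(\<lambda>N. q N * x^N) = (\<lambda>N. sh (diffs (diffs c)) N * x^N + ((lam + 1) * diffs c N) * x^N
       + (mu * lam * sh c N) * x^N + (eps * lam * c N) * x^N + (mu * sh (sh (diffs c)) N) * x^N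
       + (eps * sh (diffs c) N) * x^N + (Om * sh c N) * x^N + (eps * om * c N) * x^N)"
      by (rule ext) (simp only: q_def distrib_right)
    show ?thesis unfolding eq by (intro sums_add p1 p2 p3 p4 p5 p6 p7 p8)
  qed
  moreover have "q N = 0" for N
  proof (cases N)
    case 0
    then show ?thesis using rec[of 0] unfolding q_def sh_def diffs_def by (simp add: algebra_simps)
  next
    case (Suc M)
    show ?thesis
    proof (cases M)
      case 0
      then show ?thesis using rec[of 1] Suc unfolding q_def sh_def diffs_def by (simp add: algebra_simps)
    next
      case (Suc K)
      then show ?thesis using rec[of N] \<open>N = Suc M\<close> unfolding q_def sh_def diffs_def
        by (simp add: algebra_simps)
    qed
  qed
  ultimately have "(\<lambda>N. 0) sums (x * h2 x + (lam + 1) * h1 x + mu * lam * (x * h x) + eps * lam * h x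
     + mu * (x * (x * h1 x)) + eps * (x * h1 x) + Om * (x * h x) + eps * om * h x)" by simp
  then have "x * h2 x + (lam + 1) * h1 x + mu * lam * (x * h x) + eps * lam * h x
     + mu * (x * (x * h1 x)) + eps * (x * h1 x) + Om * (x * h x) + eps * om * h x = 0"
    using sums_unique sums_zero by metis
  then show ?thesis by (simp add: algebra_simps)
qed

lemma ode_alg:
  fixes C0 p x h h1 h2 lam mu eps Om om :: complex
  assumes "x \<noteq> 0"
  shows "x * (C0 * (lam * ((lam - 1) * (p / x / x)) * h + h1 * (lam * (p / x)) + (h2 * p + lam * (p / x) * h1)))
     + (mu * x^2 + eps * x + (1 - lam)) * (C0 * (lam * (p / x) * h + h1 * p))
     + (Om * x + eps * om) * (C0 * (p * h))
   = C0 * p * (x * h2 + (lam + 1) * h1 + (mu * x + eps) * (lam * h + x * h1) + (Om * x + eps * om) * h)"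
  using assms by (simp add: field_simps power2_eq_square)

theorem mainTheorem2:
  fixes mu eps nu Om om :: complex
  assumes "mu \<noteq> 0"
    and "\<forall>m::nat. m \<ge> 2 \<longrightarrow> nu \<noteq> of_nat m"
    and "1 - Om / (2 * mu) \<notin> \<int>\<^sub>\<le>\<^sub>0"
  shows "(\<forall>x::complex. RW_converges ((1 + nu) / 2) (Om / (2 * mu)) om (- eps * x / 2) (- mu * x\<^sup>2 / 2))
    \<and> RW_sol mu eps nu Om om holomorphic_on (- \<real>\<^sub>\<le>\<^sub>0)
    \<and> (\<forall>x \<in> - \<real>\<^sub>\<le>\<^sub>0.
         x * deriv (deriv (RW_sol mu eps nu Om om)) x
         + (mu * x\<^sup>2 + eps * x + nu) * deriv (RW_sol mu eps nu Om om) x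
         + (Om * x + eps * om) * RW_sol mu eps nu Om om x = 0)"
proof -
  define g where "g = (1 + nu) / 2"
  define a where "a = Om / (2 * mu)"
  define al where "al = - eps / 2"
  define be where "be = - mu / 2"
  define lam where "lam = 2 * (1 - g)"
  have hyp: "3 - 2*g + of_nat m \<noteq> 0" for m :: nat
  proof
    assume "3 - 2*g + of_nat m = 0"
    then have "2 * nu = 2 * (of_nat m + 2)" unfolding g_def by (simp add: field_simps)
    then have "nu = of_nat m + 2" by (metis mult_cancel_left zero_neq_numeral)
    then have "nu = of_nat (m + 2)" by simp
    with assms(2) show False by (metis le_add2)
  qed
  interpret P: params g a om by unfold_locales (rule hyp)
  have ex: "- eps * x / 2 = al * x" "- mu * x\<^sup>2 / 2 = be * x^2" for x
    unfolding al_def be_def by simp_all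
  have part1: "\<forall>x::complex. RW_converges g a om (- eps * x / 2) (- mu * x\<^sup>2 / 2)"
    using P.braces_eq by blast
  define c where "c = cc g a om al be"
  have conv: "summable (\<lambda>N. c N * x^N)" for x unfolding c_def using P.cc_series by blast
  define h where "h = (\<lambda>x. \<Sum>N. c N * x^N)"
  define h1 where "h1 = (\<lambda>x. \<Sum>N. diffs c N * x^N)"
  define h2 where "h2 = (\<lambda>x. \<Sum>N. diffs (diffs c) N * x^N)"
  have hb: "RW_braces g a om (- eps * x / 2) (- mu * x\<^sup>2 / 2) = h x" for x
    unfolding ex h_def c_def using P.cc_series by blast
  define C0 where "C0 = (- mu / 2) powr (1 - g) * (Gamma (1 - a) / Gamma (2 - g))"
  have sol: "RW_sol mu eps nu Om om = (\<lambda>x. C0 * (x powr lam * h x))"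
    unfolding RW_sol_def Let_def hb[unfolded g_def a_def, symmetric] C0_def lam_def g_def a_def
    by (rule ext) (simp add: mult_ac)
  have Om_eq: "Om = 2 * a * mu" unfolding a_def using assms(1) by simp
  have lam_eq: "lam = 2 - 2*g" unfolding lam_def by simp
  have rec: "of_nat (N+1) * (of_nat (N+1) + lam) * c (N+1) + eps * (of_nat N + lam + om) * c N
        + (if N \<ge> 1 then (mu * (of_nat N - 1 + lam) + Om) * c (N - 1) else 0) = 0" for N
  proof -
    note R = P.cc_rec[of "N+1" al be]
    have A: "4 * (a - g + of_nat (N+1) / 2) * be = - (mu * (of_nat N - 1 + lam) + Om)"
      unfolding be_def lam_eq Om_eq by (simp add: field_simps)
    have B: "4 * (of_nat (N+1) / 2 + 1/2 - g + om/2) * al = - eps * (of_nat N + lam + om)"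
      unfolding al_def lam_eq by (simp add: field_simps)
    have R': "of_nat (N+1) * (of_nat (N+1) + lam) * c (N+1)
       = (if N \<ge> 1 then (4 * (a - g + of_nat (N+1) / 2) * be) * c (N-1) else 0)
         + (4 * (of_nat (N+1) / 2 + 1/2 - g + om/2) * al) * c N"
      using R unfolding c_def lam_eq by (cases "N \<ge> 1") (simp_all add: mult.assoc)
    show ?thesis unfolding R' A B by (cases "N \<ge> 1") (simp_all add: algebra_simps)
  qed
  have Q0: "x * h2 x + (lam + 1) * h1 x + (mu * x + eps) * (lam * h x + x * h1 x) + (Om * x + eps * om) * h x = 0" for x
    unfolding h_def h1_def h2_def by (rule ode_series[OF conv rec])
  define S where "S = - (\<real>\<^sub>\<le>\<^sub>0 :: complex set)"
  have oS: "open S" unfolding S_def by (simp add: open_Compl)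
  define y1 where "y1 = (\<lambda>x. C0 * (lam * x powr (lam - 1) * h x + h1 x * x powr lam))"
  define y2 where "y2 = (\<lambda>x. C0 * (lam * ((lam - 1) * x powr (lam - 1 - 1)) * h x + h1 x * (lam * x powr (lam - 1))
        + (h2 x * x powr lam + lam * x powr (lam - 1) * h1 x)))"
  have dh: "(h has_field_derivative h1 x) (at x)" for x
    unfolding h_def h1_def by (rule termdiffs_strong_converges_everywhere[OF conv])
  have dh1: "(h1 has_field_derivative h2 x) (at x)" for x
    unfolding h1_def h2_def by (rule termdiffs_strong_converges_everywhere[OF termdiff_converges_all[OF conv]])
  have D1: "(RW_sol mu eps nu Om om has_field_derivative y1 x) (at x)" if "x \<in> S" for x
  proof -
    have xn: "x \<notin> \<real>\<^sub>\<le>\<^sub>0" using that unfolding S_def by simp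
    show ?thesis unfolding sol y1_def
      by (rule DERIV_cmult, rule DERIV_mult[OF has_field_derivative_powr[OF xn] dh])
  qed
  have D2: "(y1 has_field_derivative y2 x) (at x)" if "x \<in> S" for x
  proof -
    have xn: "x \<notin> \<real>\<^sub>\<le>\<^sub>0" using that unfolding S_def by simp
    show ?thesis unfolding y1_def y2_def
      by (rule DERIV_cmult, rule DERIV_add, rule DERIV_mult, rule DERIV_cmult,
          rule has_field_derivative_powr[OF xn], rule dh, rule DERIV_mult[OF dh1 has_field_derivative_powr[OF xn]])
  qed
  have holo: "RW_sol mu eps nu Om om holomorphic_on S"
    using D1 oS by (auto simp: holomorphic_on_open)
  have dd: "deriv (RW_sol mu eps nu Om om) x = y1 x" if "x \<in> S" for x
    using D1[OF that] by (rule DERIV_imp_deriv)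
  have ddd: "deriv (deriv (RW_sol mu eps nu Om om)) x = y2 x" if "x \<in> S" for x
  proof -
    have "(deriv (RW_sol mu eps nu Om om) has_field_derivative y2 x) (at x)"
      by (rule has_field_derivative_transform_within_open[OF D2[OF that] oS that]) (simp add: dd)
    then show ?thesis by (rule DERIV_imp_deriv)
  qed
  have nu_eq: "nu = 1 - lam" unfolding lam_def g_def by (simp add: field_simps)
  have ode: "x * deriv (deriv (RW_sol mu eps nu Om om)) x
         + (mu * x\<^sup>2 + eps * x + nu) * deriv (RW_sol mu eps nu Om om) x
         + (Om * x + eps * om) * RW_sol mu eps nu Om om x = 0" if "x \<in> S" for x
  proof -
    have x0: "x \<noteq> 0" using that unfolding S_def by auto
    have p1: "x powr (lam - 1) = x powr lam / x" by (rule powr_m1[OF x0])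
    have p2: "x powr (lam - 1 - 1) = x powr lam / x / x" using powr_m1[OF x0, of "lam - 1"] p1 by simp
    have "x * deriv (deriv (RW_sol mu eps nu Om om)) x
         + (mu * x\<^sup>2 + eps * x + nu) * deriv (RW_sol mu eps nu Om om) x
         + (Om * x + eps * om) * RW_sol mu eps nu Om om x
      = C0 * x powr lam * (x * h2 x + (lam + 1) * h1 x + (mu * x + eps) * (lam * h x + x * h1 x) + (Om * x + eps * om) * h x)"
    proof -
      have E: "x * deriv (deriv (RW_sol mu eps nu Om om)) x
         + (mu * x\<^sup>2 + eps * x + nu) * deriv (RW_sol mu eps nu Om om) x
         + (Om * x + eps * om) * RW_sol mu eps nu Om om x
         = x * y2 x + (mu * x\<^sup>2 + eps * x + nu) * y1 x + (Om * x + eps * om) * (C0 * (x powr lam * h x))"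
        using ddd[OF that] dd[OF that] sol by simp
      show ?thesis unfolding E y1_def y2_def p1 p2 by (subst nu_eq) (rule ode_alg[OF x0])
    qed
    then show ?thesis using Q0[of x] by simp
  qed
  show ?thesis using part1 holo ode unfolding S_def g_def a_def by blast
qed

end
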